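(* With notation as in the context (type $E_7$), let $\alpha$ be a positive root of $E_7$ with $\alpha\notin\Delta_7^+$, let $s\in\{1,3,4,5,6,7\}$ and let $\beta\in\Delta_s^+$. Then $f(\beta)\oplus f(\alpha)\in\Gamma_s^+$ if and only if $\beta+\alpha\in\Delta_s^+$ or $\beta-\alpha\in\Delta_s^+$.
   Context: Let $F=\{0,1,2,3\}$ be the group $\mathbb{Z}/2\times\mathbb{Z}/2$ with operation $\oplus$ (binary addition without carry) and symplectic form $(a|a')=0$ if $a=0$, $a'=0$ or $a=a'$, and $1$ otherwise. Let $V=F^3$ (elements written $abc$), with coordinatewise $\oplus$ and form $(abc|a'b'c')=(a|a')+(b|b')+(c|c')\in\mathbb{Z}/2$. Let $\Delta$ be the $E_7$ root system with simple roots $\alpha_1,\dots,\alpha_7$, $\langle\alpha_i,\alpha_i\rangle=2$, $\langle\alpha_i,\alpha_j\rangle=-1$ for $\{i,j\}\in\{\{1,3\},\{3,4\},\{4,5\},\{5,6\},\{6,7\},\{2,4\}\}$, $0$ otherwise; $\Lambda=\bigoplus\mathbb{Z}\alpha_i$, $\Delta^+$ the positive roots. Let $f:\Lambda\to V$ be the homomorphism with $f(\alpha_1)=100$, $f(\alpha_2)=030$, $f(\alpha_3)=300$, $f(\alpha_4)=111$, $f(\alpha_5)=003$, $f(\alpha_6)=001$, $f(\alpha_7)=033$. For $\beta=\sum\beta^i\alpha_i\in\Delta^+$ let $m(\beta)=\max\{i:\beta^i\ne0\}$; set $\Delta_1^+=\{\alpha_1\}$, $\Delta_3^+=\{\beta: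 m(\beta)\in\{2,3\}\}$, $\Delta_s^+=\{\beta: m(\beta)=s\}$ for $s=4,\dots,7$, and $\Gamma_s^+=f(\Delta_s^+)$. *)

theory Defs
  imports Main
begin

text \<open>F = {0,1,2,3} with binary addition without carry (bitwise xor on nat).
  V = F^3, elements written abc, represented as triples.\<close>

type_synonym vecV = "nat \<times> nat \<times> nat"

definition Fset :: "nat set" where "Fset = {0,1,2,3}"

definition Vset :: "vecV set" where "Vset = Fset \<times> Fset \<times> Fset"

definition oplusV :: "vecV \<Rightarrow> vecV \<Rightarrow> vecV" (infixl "\<oplus>\<^sub>V" 65) where
  "oplusV u w = (xor (fst u) (fst w), xor (fst (snd u)) (fst (snd w)),
                 xor (snd (snd u)) (snd (snd w)))"

definition zeroV :: vecV where "zeroV = (0,0,0)"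

text \<open>Elements of \<Lambda> = \<oplus> Z alpha_i are coefficient functions nat \<Rightarrow> int supported in {1..7};
  beta corresponds to \<Sum> beta i * alpha_i.\<close>

definition Lam :: "(nat \<Rightarrow> int) set" where
  "Lam = {\<beta>. \<forall>i. i \<notin> {1..7} \<longrightarrow> \<beta> i = 0}"

definition simple_root :: "nat \<Rightarrow> nat \<Rightarrow> int" where
  "simple_root i = (\<lambda>j. if j = i then 1 else 0)"

definition E7_edge :: "nat \<Rightarrow> nat \<Rightarrow> bool" where
  "E7_edge i j \<longleftrightarrow> {i,j} \<in> {{1,3},{3,4},{4,5},{5,6},{6,7},{2,4}}"

definition E7_cartan :: "nat \<Rightarrow> nat \<Rightarrow> int" where
  "E7_cartan i j = (if i = j then 2 else if E7_edge i j then -1 else 0)"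

definition E7_form :: "(nat \<Rightarrow> int) \<Rightarrow> (nat \<Rightarrow> int) \<Rightarrow> int" where
  "E7_form \<beta> \<gamma> = (\<Sum>i\<in>{1..7}. \<Sum>j\<in>{1..7}. \<beta> i * \<gamma> j * E7_cartan i j)"

text \<open>The E7 root system (simply laced): the vectors of norm 2 in the root lattice.\<close>
definition E7_roots :: "(nat \<Rightarrow> int) set" where
  "E7_roots = {\<beta> \<in> Lam. E7_form \<beta> \<beta> = 2}"

definition E7_pos :: "(nat \<Rightarrow> int) set" where
  "E7_pos = {\<beta> \<in> E7_roots. \<forall>i. 0 \<le> \<beta> i}"

definition f_simple :: "nat \<Rightarrow> vecV" where
  "f_simple i = (if i = 1 then (1,0,0) else if i = 2 then (0,3,0)
     else if i = 3 then (3,0,0) else if i = 4 then (1,1,1)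
     else if i = 5 then (0,0,3) else if i = 6 then (0,0,1)
     else if i = 7 then (0,3,3) else zeroV)"

text \<open>n * v in V equals v for n odd and 0 for n even (V has exponent 2); f is the
  unique homomorphism extending f_simple.\<close>
definition smulV :: "int \<Rightarrow> vecV \<Rightarrow> vecV" where
  "smulV n v = (if odd n then v else zeroV)"

definition fE7 :: "(nat \<Rightarrow> int) \<Rightarrow> vecV" where
  "fE7 \<beta> = foldr (\<lambda>i acc. smulV (\<beta> i) (f_simple i) \<oplus>\<^sub>V acc) [1..<8] zeroV"

definition mE7 :: "(nat \<Rightarrow> int) \<Rightarrow> nat" where
  "mE7 \<beta> = Max {i \<in> {1..7}. \<beta> i \<noteq> 0}"

definition Delta_s :: "nat \<Rightarrow> (nat \<Rightarrow> int) set" where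
  "Delta_s s = (if s = 1 then {simple_root 1}
     else if s = 3 then {\<beta> \<in> E7_pos. mE7 \<beta> \<in> {2,3}}
     else {\<beta> \<in> E7_pos. mE7 \<beta> = s})"

definition Gamma_s :: "nat \<Rightarrow> vecV set" where
  "Gamma_s s = fE7 ` Delta_s s"

end

theory Submission
  imports Defs
begin
definition PL :: "int list list" where "PL = [
  [0,0,0,0,0,0,1],
  [0,0,0,0,0,1,0],
  [0,0,0,0,1,0,0],
  [0,0,0,1,0,0,0],
  [0,0,1,0,0,0,0],
  [0,1,0,0,0,0,0],
  [1,0,0,0,0,0,0],
  [0,0,0,0,0,1,1],
  [0,0,0,0,1,1,0],
  [0,0,0,1,1,0,0],
  [0,0,1,1,0,0,0],
  [0,1,0,1,0,0,0],
  [1,0,1,0,0,0,0],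
  [0,0,0,0,1,1,1],
  [0,0,0,1,1,1,0],
  [0,0,1,1,1,0,0],
  [0,1,0,1,1,0,0],
  [0,1,1,1,0,0,0],
  [1,0,1,1,0,0,0],
  [0,0,0,1,1,1,1],
  [0,0,1,1,1,1,0],
  [0,1,0,1,1,1,0],
  [0,1,1,1,1,0,0],
  [1,0,1,1,1,0,0],
  [1,1,1,1,0,0,0],
  [0,0,1,1,1,1,1],
  [0,1,0,1,1,1,1],
  [0,1,1,1,1,1,0],
  [0,1,1,2,1,0,0],
  [1,0,1,1,1,1,0],
  [1,1,1,1,1,0,0],
  [0,1,1,1,1,1,1],
  [0,1,1,2,1,1,0],
  [1,0,1,1,1,1,1],
  [1,1,1,1,1,1,0],
  [1,1,1,2,1,0,0],
  [0,1,1,2,1,1,1],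
  [0,1,1,2,2,1,0],
  [1,1,1,1,1,1,1],
  [1,1,1,2,1,1,0],
  [1,1,2,2,1,0,0],
  [0,1,1,2,2,1,1],
  [1,1,1,2,1,1,1],
  [1,1,1,2,2,1,0],
  [1,1,2,2,1,1,0],
  [0,1,1,2,2,2,1],
  [1,1,1,2,2,1,1],
  [1,1,2,2,1,1,1],
  [1,1,2,2,2,1,0],
  [1,1,1,2,2,2,1],
  [1,1,2,2,2,1,1],
  [1,1,2,3,2,1,0],
  [1,1,2,2,2,2,1],
  [1,1,2,3,2,1,1],
  [1,2,2,3,2,1,0],
  [1,1,2,3,2,2,1],
  [1,2,2,3,2,1,1],
  [1,1,2,3,3,2,1],
  [1,2,2,3,2,2,1],
  [1,2,2,3,3,2,1],
  [1,2,2,4,3,2,1],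
  [1,2,3,4,3,2,1],
  [2,2,3,4,3,2,1]]"

definition Qp :: "int \<Rightarrow> int \<Rightarrow> int \<Rightarrow> int \<Rightarrow> int \<Rightarrow> int \<Rightarrow> int \<Rightarrow> int" where
  "Qp a b c d e f g = 2*(a*a+b*b+c*c+d*d+e*e+f*f+g*g) - 2*(a*c + c*d + d*e + e*f + f*g + b*d)"

lemma Qp_sos: "60 * Qp a b c d e f g = 30*(2*a-c)^2 + 30*(2*b-d)^2 + 10*(3*c-2*d)^2
  + 2*(5*d-6*e)^2 + 3*(4*e-5*f)^2 + 5*(3*f-4*g)^2 + 40*g^2"
  unfolding Qp_def by (simp add: power2_eq_square algebra_simps)

lemma Qp_psd: "Qp a b c d e f g \<ge> 0"
proof -
  have "60 * Qp a b c d e f g \<ge> 0" unfolding Qp_sos by simp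
  thus ?thesis by simp
qed

lemma Qp_def0: assumes "Qp a b c d e f g = 0"
  shows "a = 0 \<and> b = 0 \<and> c = 0 \<and> d = 0 \<and> e = 0 \<and> f = 0 \<and> g = 0"
proof -
  have h: "30*(2*a-c)^2 + 30*(2*b-d)^2 + 10*(3*c-2*d)^2
  + 2*(5*d-6*e)^2 + 3*(4*e-5*f)^2 + 5*(3*f-4*g)^2 + 40*g^2 = 0"
    using Qp_sos[of a b c d e f g] assms by simp
  have "(2*a-c)^2 = 0" "(2*b-d)^2 = 0" "(3*c-2*d)^2 = 0" "(5*d-6*e)^2 = 0"
    "(4*e-5*f)^2 = 0" "(3*f-4*g)^2 = 0" "g^2 = 0"
    using h by (smt (verit) zero_le_power2)+
  thus ?thesis by simp
qed

lemma form_expl: "E7_form x x = Qp (x 1) (x 2) (x 3) (x 4) (x 5) (x 6) (x 7)"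
proof -
  have s: "{1..7::nat} = {1,2,3,4,5,6,7}" by auto
  show ?thesis unfolding E7_form_def E7_cartan_def E7_edge_def s Qp_def
    by (simp add: doubleton_eq_iff algebra_simps)
qed

lemma chkall1: "\<forall>l\<in>set PL. Qp (l!0+1) (l!1) (l!2) (l!3) (l!4) (l!5) (l!6) = 2 \<longrightarrow> [(l!0+1),(l!1),(l!2),(l!3),(l!4),(l!5),(l!6)] \<in> set PL"
  by code_simp

lemma chk1: "[a,b,c,d,e,f,g] : set PL ==> Qp (a+1) b c d e f g = 2 ==> [(a+1),b,c,d,e,f,g] : set PL"
  by (drule bspec[OF chkall1]) simp

lemma chkall2: "\<forall>l\<in>set PL. Qp (l!0) (l!1+1) (l!2) (l!3) (l!4) (l!5) (l!6) = 2 \<longrightarrow> [(l!0),(l!1+1),(l!2),(l!3),(l!4),(l!5),(l!6)] \<in> set PL"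
  by code_simp

lemma chk2: "[a,b,c,d,e,f,g] : set PL ==> Qp a (b+1) c d e f g = 2 ==> [a,(b+1),c,d,e,f,g] : set PL"
  by (drule bspec[OF chkall2]) simp

lemma chkall3: "\<forall>l\<in>set PL. Qp (l!0) (l!1) (l!2+1) (l!3) (l!4) (l!5) (l!6) = 2 \<longrightarrow> [(l!0),(l!1),(l!2+1),(l!3),(l!4),(l!5),(l!6)] \<in> set PL"
  by code_simp

lemma chk3: "[a,b,c,d,e,f,g] : set PL ==> Qp a b (c+1) d e f g = 2 ==> [a,b,(c+1),d,e,f,g] : set PL"
  by (drule bspec[OF chkall3]) simp

lemma chkall4: "\<forall>l\<in>set PL. Qp (l!0) (l!1) (l!2) (l!3+1) (l!4) (l!5) (l!6) = 2 \<longrightarrow> [(l!0),(l!1),(l!2),(l!3+1),(l!4),(l!5),(l!6)] \<in> set PL"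
  by code_simp

lemma chk4: "[a,b,c,d,e,f,g] : set PL ==> Qp a b c (d+1) e f g = 2 ==> [a,b,c,(d+1),e,f,g] : set PL"
  by (drule bspec[OF chkall4]) simp

lemma chkall5: "\<forall>l\<in>set PL. Qp (l!0) (l!1) (l!2) (l!3) (l!4+1) (l!5) (l!6) = 2 \<longrightarrow> [(l!0),(l!1),(l!2),(l!3),(l!4+1),(l!5),(l!6)] \<in> set PL"
  by code_simp

lemma chk5: "[a,b,c,d,e,f,g] : set PL ==> Qp a b c d (e+1) f g = 2 ==> [a,b,c,d,(e+1),f,g] : set PL"
  by (drule bspec[OF chkall5]) simp

lemma chkall6: "\<forall>l\<in>set PL. Qp (l!0) (l!1) (l!2) (l!3) (l!4) (l!5+1) (l!6) = 2 \<longrightarrow> [(l!0),(l!1),(l!2),(l!3),(l!4),(l!5+1),(l!6)] \<in> set PL"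
  by code_simp

lemma chk6: "[a,b,c,d,e,f,g] : set PL ==> Qp a b c d e (f+1) g = 2 ==> [a,b,c,d,e,(f+1),g] : set PL"
  by (drule bspec[OF chkall6]) simp

lemma chkall7: "\<forall>l\<in>set PL. Qp (l!0) (l!1) (l!2) (l!3) (l!4) (l!5) (l!6+1) = 2 \<longrightarrow> [(l!0),(l!1),(l!2),(l!3),(l!4),(l!5),(l!6+1)] \<in> set PL"
  by code_simp

lemma chk7: "[a,b,c,d,e,f,g] : set PL ==> Qp a b c d e f (g+1) = 2 ==> [a,b,c,d,e,f,(g+1)] : set PL"
  by (drule bspec[OF chkall7]) simp

lemma key: "nat (a+b+c+d+e+f+g) = n ==> 0 <= a ==> 0 <= b ==> 0 <= c ==> 0 <= d ==> 0 <= e ==> 0 <= f ==> 0 <= g ==> Qp a b c d e f g = 2 ==> [a,b,c,d,e,f,g] : set PL"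
proof (induction n arbitrary: a b c d e f g rule: less_induct)
  case (less n a b c d e f g)
  have sum: "Qp a b c d e f g = a*(2*a-c) + b*(2*b-d) + c*(2*c-a-d) + d*(2*d-b-c-e) + e*(2*e-d-f) + f*(2*f-e-g) + g*(2*g-f)"
    by (simp add: Qp_def algebra_simps)
  consider "a >= 1 & 2*a-c >= 1" | "b >= 1 & 2*b-d >= 1" | "c >= 1 & 2*c-a-d >= 1" | "d >= 1 & 2*d-b-c-e >= 1" | "e >= 1 & 2*e-d-f >= 1" | "f >= 1 & 2*f-e-g >= 1" | "g >= 1 & 2*g-f >= 1"
  proof (rule ccontr)
    assume "~ thesis"
    with that have "a*(2*a-c) <= 0" "b*(2*b-d) <= 0" "c*(2*c-a-d) <= 0" "d*(2*d-b-c-e) <= 0" "e*(2*e-d-f) <= 0" "f*(2*f-e-g) <= 0" "g*(2*g-f) <= 0"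
      using less.prems by (smt (verit) mult_nonneg_nonpos)+
    then show False using sum less.prems by (smt (verit))
  qed
  then show ?case
  proof cases
    case 1
    have sh: "Qp (a-1) b c d e f g = Qp a b c d e f g - 2*(2*a-c) + 2" by (simp add: Qp_def algebra_simps)
    have "Qp (a-1) b c d e f g >= 0" by (rule Qp_psd)
    then have "2*a-c \<le> 2" using sh less.prems by (smt (verit))
    then have "2*a-c = 1 \<or> 2*a-c = 2" using 1 by arith
    then show ?thesis
    proof
      assume "2*a-c = 2"
      then have "Qp (a-1) b c d e f g = 0" using sh less.prems by simp
      from Qp_def0[OF this] have "a = 1 & b = 0 & c = 0 & d = 0 & e = 0 & f = 0 & g = 0" by simp
      then show ?thesis by (simp add: PL_def)
    next
      assume "2*a-c = 1"
      then have q: "Qp (a-1) b c d e f g = 2" using sh less.prems by simp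
      have "[(a-1),b,c,d,e,f,g] : set PL"
        by (rule less.IH[of "nat ((a-1)+b+c+d+e+f+g)"]) (use less.prems 1 q in auto)
      from chk1[OF this] show ?thesis using q less.prems by simp
    qed
  next
    case 2
    have sh: "Qp a (b-1) c d e f g = Qp a b c d e f g - 2*(2*b-d) + 2" by (simp add: Qp_def algebra_simps)
    have "Qp a (b-1) c d e f g >= 0" by (rule Qp_psd)
    then have "2*b-d \<le> 2" using sh less.prems by (smt (verit))
    then have "2*b-d = 1 \<or> 2*b-d = 2" using 2 by arith
    then show ?thesis
    proof
      assume "2*b-d = 2"
      then have "Qp a (b-1) c d e f g = 0" using sh less.prems by simp
      from Qp_def0[OF this] have "a = 0 & b = 1 & c = 0 & d = 0 & e = 0 & f = 0 & g = 0" by simp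
      then show ?thesis by (simp add: PL_def)
    next
      assume "2*b-d = 1"
      then have q: "Qp a (b-1) c d e f g = 2" using sh less.prems by simp
      have "[a,(b-1),c,d,e,f,g] : set PL"
        by (rule less.IH[of "nat (a+(b-1)+c+d+e+f+g)"]) (use less.prems 2 q in auto)
      from chk2[OF this] show ?thesis using q less.prems by simp
    qed
  next
    case 3
    have sh: "Qp a b (c-1) d e f g = Qp a b c d e f g - 2*(2*c-a-d) + 2" by (simp add: Qp_def algebra_simps)
    have "Qp a b (c-1) d e f g >= 0" by (rule Qp_psd)
    then have "2*c-a-d \<le> 2" using sh less.prems by (smt (verit))
    then have "2*c-a-d = 1 \<or> 2*c-a-d = 2" using 3 by arith
    then show ?thesis
    proof
      assume "2*c-a-d = 2"
      then have "Qp a b (c-1) d e f g = 0" using sh less.prems by simp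
      from Qp_def0[OF this] have "a = 0 & b = 0 & c = 1 & d = 0 & e = 0 & f = 0 & g = 0" by simp
      then show ?thesis by (simp add: PL_def)
    next
      assume "2*c-a-d = 1"
      then have q: "Qp a b (c-1) d e f g = 2" using sh less.prems by simp
      have "[a,b,(c-1),d,e,f,g] : set PL"
        by (rule less.IH[of "nat (a+b+(c-1)+d+e+f+g)"]) (use less.prems 3 q in auto)
      from chk3[OF this] show ?thesis using q less.prems by simp
    qed
  next
    case 4
    have sh: "Qp a b c (d-1) e f g = Qp a b c d e f g - 2*(2*d-b-c-e) + 2" by (simp add: Qp_def algebra_simps)
    have "Qp a b c (d-1) e f g >= 0" by (rule Qp_psd)
    then have "2*d-b-c-e \<le> 2" using sh less.prems by (smt (verit))
    then have "2*d-b-c-e = 1 \<or> 2*d-b-c-e = 2" using 4 by arith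
    then show ?thesis
    proof
      assume "2*d-b-c-e = 2"
      then have "Qp a b c (d-1) e f g = 0" using sh less.prems by simp
      from Qp_def0[OF this] have "a = 0 & b = 0 & c = 0 & d = 1 & e = 0 & f = 0 & g = 0" by simp
      then show ?thesis by (simp add: PL_def)
    next
      assume "2*d-b-c-e = 1"
      then have q: "Qp a b c (d-1) e f g = 2" using sh less.prems by simp
      have "[a,b,c,(d-1),e,f,g] : set PL"
        by (rule less.IH[of "nat (a+b+c+(d-1)+e+f+g)"]) (use less.prems 4 q in auto)
      from chk4[OF this] show ?thesis using q less.prems by simp
    qed
  next
    case 5
    have sh: "Qp a b c d (e-1) f g = Qp a b c d e f g - 2*(2*e-d-f) + 2" by (simp add: Qp_def algebra_simps)
    have "Qp a b c d (e-1) f g >= 0" by (rule Qp_psd)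
    then have "2*e-d-f \<le> 2" using sh less.prems by (smt (verit))
    then have "2*e-d-f = 1 \<or> 2*e-d-f = 2" using 5 by arith
    then show ?thesis
    proof
      assume "2*e-d-f = 2"
      then have "Qp a b c d (e-1) f g = 0" using sh less.prems by simp
      from Qp_def0[OF this] have "a = 0 & b = 0 & c = 0 & d = 0 & e = 1 & f = 0 & g = 0" by simp
      then show ?thesis by (simp add: PL_def)
    next
      assume "2*e-d-f = 1"
      then have q: "Qp a b c d (e-1) f g = 2" using sh less.prems by simp
      have "[a,b,c,d,(e-1),f,g] : set PL"
        by (rule less.IH[of "nat (a+b+c+d+(e-1)+f+g)"]) (use less.prems 5 q in auto)
      from chk5[OF this] show ?thesis using q less.prems by simp
    qed
  next
    case 6
    have sh: "Qp a b c d e (f-1) g = Qp a b c d e f g - 2*(2*f-e-g) + 2" by (simp add: Qp_def algebra_simps)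
    have "Qp a b c d e (f-1) g >= 0" by (rule Qp_psd)
    then have "2*f-e-g \<le> 2" using sh less.prems by (smt (verit))
    then have "2*f-e-g = 1 \<or> 2*f-e-g = 2" using 6 by arith
    then show ?thesis
    proof
      assume "2*f-e-g = 2"
      then have "Qp a b c d e (f-1) g = 0" using sh less.prems by simp
      from Qp_def0[OF this] have "a = 0 & b = 0 & c = 0 & d = 0 & e = 0 & f = 1 & g = 0" by simp
      then show ?thesis by (simp add: PL_def)
    next
      assume "2*f-e-g = 1"
      then have q: "Qp a b c d e (f-1) g = 2" using sh less.prems by simp
      have "[a,b,c,d,e,(f-1),g] : set PL"
        by (rule less.IH[of "nat (a+b+c+d+e+(f-1)+g)"]) (use less.prems 6 q in auto)
      from chk6[OF this] show ?thesis using q less.prems by simp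
    qed
  next
    case 7
    have sh: "Qp a b c d e f (g-1) = Qp a b c d e f g - 2*(2*g-f) + 2" by (simp add: Qp_def algebra_simps)
    have "Qp a b c d e f (g-1) >= 0" by (rule Qp_psd)
    then have "2*g-f \<le> 2" using sh less.prems by (smt (verit))
    then have "2*g-f = 1 \<or> 2*g-f = 2" using 7 by arith
    then show ?thesis
    proof
      assume "2*g-f = 2"
      then have "Qp a b c d e f (g-1) = 0" using sh less.prems by simp
      from Qp_def0[OF this] have "a = 0 & b = 0 & c = 0 & d = 0 & e = 0 & f = 0 & g = 1" by simp
      then show ?thesis by (simp add: PL_def)
    next
      assume "2*g-f = 1"
      then have q: "Qp a b c d e f (g-1) = 2" using sh less.prems by simp
      have "[a,b,c,d,e,f,(g-1)] : set PL"
        by (rule less.IH[of "nat (a+b+c+d+e+f+(g-1))"]) (use less.prems 7 q in auto)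
      from chk7[OF this] show ?thesis using q less.prems by simp
    qed
  qed
qed
definition DLF :: "nat \<Rightarrow> (int list \<times> vecV) list" where
  "DLF s = (if s = 1 then [([1,0,0,0,0,0,0], (1,0,0))]
    else if s = 3 then [([0,0,1,0,0,0,0], (3,0,0)), ([0,1,0,0,0,0,0], (0,3,0)), ([1,0,1,0,0,0,0], (2,0,0))]
    else if s = 4 then [([0,0,0,1,0,0,0], (1,1,1)), ([0,0,1,1,0,0,0], (2,1,1)), ([0,1,0,1,0,0,0], (1,2,1)), ([0,1,1,1,0,0,0], (2,2,1)), ([1,0,1,1,0,0,0], (3,1,1)), ([1,1,1,1,0,0,0], (3,2,1))]
    else if s = 5 then [([0,0,0,0,1,0,0], (0,0,3)), ([0,0,0,1,1,0,0], (1,1,2)), ([0,0,1,1,1,0,0], (2,1,2)), ([0,1,0,1,1,0,0], (1,2,2)), ([0,1,1,1,1,0,0], (2,2,2)), ([1,0,1,1,1,0,0], (3,1,2)), ([0,1,1,2,1,0,0], (3,3,3)), ([1,1,1,1,1,0,0], (3,2,2)), ([1,1,1,2,1,0,0], (2,3,3)), ([1,1,2,2,1,0,0], (1,3,3))]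
    else if s = 6 then [([0,0,0,0,0,1,0], (0,0,1)), ([0,0,0,0,1,1,0], (0,0,2)), ([0,0,0,1,1,1,0], (1,1,3)), ([0,0,1,1,1,1,0], (2,1,3)), ([0,1,0,1,1,1,0], (1,2,3)), ([0,1,1,1,1,1,0], (2,2,3)), ([1,0,1,1,1,1,0], (3,1,3)), ([0,1,1,2,1,1,0], (3,3,2)), ([1,1,1,1,1,1,0], (3,2,3)), ([0,1,1,2,2,1,0], (3,3,1)), ([1,1,1,2,1,1,0], (2,3,2)), ([1,1,1,2,2,1,0], (2,3,1)), ([1,1,2,2,1,1,0], (1,3,2)), ([1,1,2,2,2,1,0], (1,3,1)), ([1,1,2,3,2,1,0], (0,2,0)), ([1,2,2,3,2,1,0], (0,1,0))]
    else [([0,0,0,0,0,0,1], (0,3,3)), ([0,0,0,0,0,1,1], (0,3,2)), ([0,0,0,0,1,1,1], (0,3,1)), ([0,0,0,1,1,1,1], (1,2,0)), ([0,0,1,1,1,1,1], (2,2,0)), ([0,1,0,1,1,1,1], (1,1,0)), ([0,1,1,1,1,1,1], (2,1,0)), ([1,0,1,1,1,1,1], (3,2,0)), ([0,1,1,2,1,1,1], (3,0,1)), ([1,1,1,1,1,1,1], (3,1,0)), ([0,1,1,2,2,1,1], (3,0,2)), ([1,1,1,2,1,1,1], (2,0,1)), ([0,1,1,2,2,2,1], (3,0,3)), ([1,1,1,2,2,1,1], (2,0,2)), ([1,1,2,2,1,1,1], (1,0,1)), ([1,1,1,2,2,2,1], (2,0,3)), ([1,1,2,2,2,1,1], (1,0,2)),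 ([1,1,2,2,2,2,1], (1,0,3)), ([1,1,2,3,2,1,1], (0,1,3)), ([1,1,2,3,2,2,1], (0,1,2)), ([1,2,2,3,2,1,1], (0,2,3)), ([1,1,2,3,3,2,1], (0,1,1)), ([1,2,2,3,2,2,1], (0,2,2)), ([1,2,2,3,3,2,1], (0,2,1)), ([1,2,2,4,3,2,1], (1,3,0)), ([1,2,3,4,3,2,1], (2,3,0)), ([2,2,3,4,3,2,1], (3,3,0))])"

definition vec :: "int list \<Rightarrow> nat \<Rightarrow> int" where
  "vec l = (\<lambda>i. if 1 \<le> i \<and> i \<le> 7 then l!(i-1) else 0)"

definition e1L :: "int list" where "e1L = [1,0,0,0,0,0,0]"

definition CL :: "int list list" where "CL = e1L # PL"

definition mL :: "int list \<Rightarrow> nat" where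
  "mL l = Max (set (filter (\<lambda>i. l!(i-1) \<noteq> 0) [1..<8]))"

definition Dl :: "nat \<Rightarrow> int list \<Rightarrow> bool" where
  "Dl s l = (if s = 1 then l = e1L else if s = 3 then l \<in> set PL \<and> mL l \<in> {2,3}
     else l \<in> set PL \<and> mL l = s)"

definition fL :: "int list \<Rightarrow> vecV" where
  "fL l = foldr (\<lambda>i acc. smulV (l!(i-1)) (f_simple i) \<oplus>\<^sub>V acc) [1..<8] zeroV"

definition DL :: "nat \<Rightarrow> int list list" where "DL s = map fst (DLF s)"

definition ALLF :: "(int list \<times> vecV) list" where
  "ALLF = concat (map DLF [1,3,4,5,6,7])"

lemma PL_props: "\<forall>l\<in>set PL. length l = 7 \<and> (\<forall>x\<in>set l. 0 \<le> x) \<and>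
   Qp (l!0) (l!1) (l!2) (l!3) (l!4) (l!5) (l!6) = 2"
  by code_simp

lemma vec_inj: assumes "length l = 7" "length l' = 7" "vec l = vec l'" shows "l = l'"
proof (rule nth_equalityI)
  show "length l = length l'" using assms by simp
  fix i assume "i < length l"
  then have "vec l (Suc i) = vec l' (Suc i)" using assms by simp
  then show "l!i = l'!i" using \<open>i < length l\<close> assms by (simp add: vec_def)
qed

lemma vec_of: assumes "\<beta> \<in> Lam" shows "\<beta> = vec [\<beta> 1, \<beta> 2, \<beta> 3, \<beta> 4, \<beta> 5, \<beta> 6, \<beta> 7]"
proof
  fix i
  show "\<beta> i = vec [\<beta> 1, \<beta> 2, \<beta> 3, \<beta> 4, \<beta> 5, \<beta> 6, \<beta> 7] i"
  proof (cases "1 \<le> i \<and> i \<le> 7")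
    case True
    then have "i = 1 \<or> i = 2 \<or> i = 3 \<or> i = 4 \<or> i = 5 \<or> i = 6 \<or> i = 7" by auto
    then show ?thesis by (auto simp: vec_def)
  next
    case False
    then show ?thesis using assms by (auto simp: vec_def Lam_def)
  qed
qed

lemma pos_char: "\<beta> \<in> E7_pos \<longleftrightarrow> (\<exists>l\<in>set PL. \<beta> = vec l)"
proof
  assume b: "\<beta> \<in> E7_pos"
  then have L: "\<beta> \<in> Lam" and q: "E7_form \<beta> \<beta> = 2" and nn: "\<And>i. 0 \<le> \<beta> i"
    by (auto simp: E7_pos_def E7_roots_def)
  have "[\<beta> 1, \<beta> 2, \<beta> 3, \<beta> 4, \<beta> 5, \<beta> 6, \<beta> 7] \<in> set PL"
    by (rule key[OF refl]) (use nn q form_expl in auto)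
  then show "\<exists>l\<in>set PL. \<beta> = vec l" using vec_of[OF L] by blast
next
  assume "\<exists>l\<in>set PL. \<beta> = vec l"
  then obtain l where l: "l \<in> set PL" "\<beta> = vec l" by blast
  have len: "length l = 7" and nn: "\<forall>x\<in>set l. 0 \<le> x"
    and q: "Qp (l!0) (l!1) (l!2) (l!3) (l!4) (l!5) (l!6) = 2"
    using PL_props l(1) by auto
  have "\<beta> \<in> Lam" using l(2) by (auto simp: Lam_def vec_def)
  moreover have "E7_form \<beta> \<beta> = 2" using q l(2) by (simp add: form_expl vec_def)
  moreover have "0 \<le> \<beta> i" for i
  proof (cases "1 \<le> i \<and> i \<le> 7")
    case True
    then have "l!(i-1) \<in> set l" using len by (intro nth_mem) linarith
    then show ?thesis using nn True l(2) by (simp add: vec_def)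
  qed (auto simp: vec_def l(2))
  ultimately show "\<beta> \<in> E7_pos" by (simp add: E7_pos_def E7_roots_def)
qed

lemma pos_vec: "length l = 7 \<Longrightarrow> vec l \<in> E7_pos \<longleftrightarrow> l \<in> set PL"
  using pos_char vec_inj PL_props by metis

lemma mE7_vec: "mE7 (vec l) = mL l"
proof -
  have "{i \<in> {1..7}. vec l i \<noteq> 0} = set (filter (\<lambda>i. l!(i-1) \<noteq> 0) [1..<8])"
    by (auto simp: vec_def)
  then show ?thesis by (simp add: mE7_def mL_def)
qed

lemma e1_vec: "simple_root 1 = vec e1L"
proof
  fix i
  show "simple_root 1 i = vec e1L i"
  proof (cases "1 \<le> i \<and> i \<le> 7")
    case True
    then have "i = 1 \<or> i = 2 \<or> i = 3 \<or> i = 4 \<or> i = 5 \<or> i = 6 \<or> i = 7" by auto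
    then show ?thesis by (auto simp: vec_def simple_root_def e1L_def)
  qed (auto simp: vec_def simple_root_def)
qed

lemma vec_Delta: "length l = 7 \<Longrightarrow> vec l \<in> Delta_s s \<longleftrightarrow> Dl s l"
  unfolding Delta_s_def Dl_def using pos_vec[of l] e1_vec vec_inj[of l e1L]
  by (auto simp: mE7_vec e1L_def)

lemma Delta_vec: "\<beta> \<in> Delta_s s \<Longrightarrow> \<exists>l\<in>set CL. \<beta> = vec l"
  unfolding Delta_s_def using pos_char e1_vec by (auto simp: CL_def split: if_splits)

lemma CL_len: "l \<in> set CL \<Longrightarrow> length l = 7"
  using PL_props by (auto simp: CL_def e1L_def)

lemma fE7_vec: "fE7 (vec l) = fL l"
  unfolding fE7_def fL_def by (intro foldr_cong) (auto simp: vec_def)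


lemma upt18: "[1..<8] = [1,2,3,4,5,6,7::nat]" by (simp add: upt_rec)

lemma fL': "fL l = foldr (\<lambda>i acc. smulV (l!(i-1)) (f_simple i) \<oplus>\<^sub>V acc) [1,2,3,4,5,6,7] zeroV"
  unfolding fL_def upt18 by (rule refl)

lemma mL': "mL l = Max (set (filter (\<lambda>i. l!(i-1) \<noteq> 0) [1,2,3,4,5,6,7]))"
  unfolding mL_def upt18 by (rule refl)

lemma C1: "\<forall>s\<in>{1,3,4,5,6,7}. \<forall>(l,v)\<in>set (DLF s). fL l = v"
  by (simp add: DLF_def fL' smulV_def f_simple_def oplusV_def zeroV_def)

lemma C2: "\<forall>s\<in>{1,3,4,5,6,7}. \<forall>l\<in>set CL. Dl s l \<longleftrightarrow> l \<in> set (DL s)"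
  by code_simp

lemma C3: "\<forall>s\<in>{1,3,4,5,6,7}. set (DL s) \<subseteq> set CL"
  by code_simp

lemma C5: "\<forall>l\<in>set PL. l \<in> set (map fst ALLF)"
  by code_simp

lemma Big1: "\<forall>(la,va)\<in>set ALLF. la \<notin> set (DL 7) \<longrightarrow> (\<forall>(lb,vb)\<in>set (DLF 1).
   (vb \<oplus>\<^sub>V va \<in> set (map snd (DLF 1))) \<longleftrightarrow> (map2 (+) lb la \<in> set (DL 1) \<or> map2 (-) lb la \<in> set (DL 1)))"
  by code_simp

lemma Big3: "\<forall>(la,va)\<in>set ALLF. la \<notin> set (DL 7) \<longrightarrow> (\<forall>(lb,vb)\<in>set (DLF 3).
   (vb \<oplus>\<^sub>V va \<in> set (map snd (DLF 3))) \<longleftrightarrow> (map2 (+) lb la \<in> set (DL 3) \<or> map2 (-) lb la \<in> set (DL 3)))"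
  by code_simp

lemma Big4: "\<forall>(la,va)\<in>set ALLF. la \<notin> set (DL 7) \<longrightarrow> (\<forall>(lb,vb)\<in>set (DLF 4).
   (vb \<oplus>\<^sub>V va \<in> set (map snd (DLF 4))) \<longleftrightarrow> (map2 (+) lb la \<in> set (DL 4) \<or> map2 (-) lb la \<in> set (DL 4)))"
  by code_simp

lemma Big5: "\<forall>(la,va)\<in>set ALLF. la \<notin> set (DL 7) \<longrightarrow> (\<forall>(lb,vb)\<in>set (DLF 5).
   (vb \<oplus>\<^sub>V va \<in> set (map snd (DLF 5))) \<longleftrightarrow> (map2 (+) lb la \<in> set (DL 5) \<or> map2 (-) lb la \<in> set (DL 5)))"
  by code_simp

lemma Big6: "\<forall>(la,va)\<in>set ALLF. la \<notin> set (DL 7) \<longrightarrow> (\<forall>(lb,vb)\<in>set (DLF 6).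
   (vb \<oplus>\<^sub>V va \<in> set (map snd (DLF 6))) \<longleftrightarrow> (map2 (+) lb la \<in> set (DL 6) \<or> map2 (-) lb la \<in> set (DL 6)))"
  by code_simp

lemma Big7: "\<forall>(la,va)\<in>set ALLF. la \<notin> set (DL 7) \<longrightarrow> (\<forall>(lb,vb)\<in>set (DLF 7).
   (vb \<oplus>\<^sub>V va \<in> set (map snd (DLF 7))) \<longleftrightarrow> (map2 (+) lb la \<in> set (DL 7) \<or> map2 (-) lb la \<in> set (DL 7)))"
  by code_simp

lemma Big: "s \<in> {1,3,4,5,6,7} \<Longrightarrow> (la,va)\<in>set ALLF \<Longrightarrow> la \<notin> set (DL 7) \<Longrightarrow> (lb,vb)\<in>set (DLF s) \<Longrightarrow>
   (vb \<oplus>\<^sub>V va \<in> set (map snd (DLF s))) \<longleftrightarrow> (map2 (+) lb la \<in> set (DL s) \<or> map2 (-) lb la \<in> set (DL s))"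
  using Big1 Big3 Big4 Big5 Big6 Big7 by fastforce


lemma Dl_DL: assumes "s \<in> {1,3,4,5,6,7}" shows "Dl s l \<longleftrightarrow> l \<in> set (DL s)"
proof
  assume "Dl s l"
  then have "l \<in> set CL" by (auto simp: Dl_def CL_def split: if_splits)
  then show "l \<in> set (DL s)" using C2 assms \<open>Dl s l\<close> by blast
next
  assume "l \<in> set (DL s)"
  then have "l \<in> set CL" using C3 assms by blast
  then show "Dl s l" using C2 assms \<open>l \<in> set (DL s)\<close> by blast
qed

lemma DLF_f: "s \<in> {1,3,4,5,6,7} \<Longrightarrow> (l,v) \<in> set (DLF s) \<Longrightarrow> fL l = v"
  using C1 by fastforce

lemma Gamma_eq: assumes s: "s \<in> {1,3,4,5,6,7}"
  shows "x \<in> Gamma_s s \<longleftrightarrow> x \<in> set (map snd (DLF s))"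
proof
  assume "x \<in> Gamma_s s"
  then obtain \<gamma> where g: "\<gamma> \<in> Delta_s s" "x = fE7 \<gamma>" by (auto simp: Gamma_s_def)
  then obtain l where l: "l \<in> set CL" "\<gamma> = vec l" using Delta_vec by blast
  have "Dl s l" using g l vec_Delta CL_len by blast
  then have "l \<in> set (DL s)" using Dl_DL s by blast
  then obtain v where v: "(l,v) \<in> set (DLF s)" by (auto simp: DL_def)
  have "x = v" using g l DLF_f[OF s v] fE7_vec by simp
  then show "x \<in> set (map snd (DLF s))" using v by force
next
  assume "x \<in> set (map snd (DLF s))"
  then obtain l where v: "(l,x) \<in> set (DLF s)" by auto
  then have "l \<in> set (DL s)" by (force simp: DL_def)
  then have D: "Dl s l" and "l \<in> set CL" using Dl_DL s C3 by blast+
  then have "vec l \<in> Delta_s s" using vec_Delta CL_len by blast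
  moreover have "fE7 (vec l) = x" using fE7_vec DLF_f[OF s v] by simp
  ultimately show "x \<in> Gamma_s s" unfolding Gamma_s_def by blast
qed

lemma vec_add: "length a = 7 \<Longrightarrow> length b = 7 \<Longrightarrow> (\<lambda>i. vec a i + vec b i) = vec (map2 (+) a b)"
proof (rule ext)
  fix i assume "length a = 7" "length b = 7"
  then show "vec a i + vec b i = vec (map2 (+) a b) i"
    by (cases "1 \<le> i \<and> i \<le> 7") (auto simp: vec_def)
qed
lemma vec_sub: "length a = 7 \<Longrightarrow> length b = 7 \<Longrightarrow> (\<lambda>i. vec a i - vec b i) = vec (map2 (-) a b)"
proof (rule ext)
  fix i assume "length a = 7" "length b = 7"
  then show "vec a i - vec b i = vec (map2 (-) a b) i"
    by (cases "1 \<le> i \<and> i \<le> 7") (auto simp: vec_def)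
qed

theorem mainTheorem11:
  fixes \<alpha> \<beta> :: "nat \<Rightarrow> int" and s :: nat
  assumes "\<alpha> \<in> E7_pos" and "\<alpha> \<notin> Delta_s 7"
    and "s \<in> {1,3,4,5,6,7}" and "\<beta> \<in> Delta_s s"
  shows "fE7 \<beta> \<oplus>\<^sub>V fE7 \<alpha> \<in> Gamma_s s \<longleftrightarrow>
         (\<lambda>i. \<beta> i + \<alpha> i) \<in> Delta_s s \<or> (\<lambda>i. \<beta> i - \<alpha> i) \<in> Delta_s s"
proof -
  have s: "s \<in> {1,3,4,5,6,7}" by fact
  obtain la where la: "la \<in> set PL" "\<alpha> = vec la" using assms(1) pos_char by blast
  have lla: "length la = 7" using la CL_len by (auto simp: CL_def)
  obtain va where va: "(la,va) \<in> set ALLF" using C5 la(1) by force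
  have "\<exists>s0\<in>{1,3,4,5,6,7}. (la,va) \<in> set (DLF s0)" using va by (auto simp: ALLF_def)
  then obtain s0 where "s0 \<in> {1,3,4,5,6,7}" "(la,va) \<in> set (DLF s0)" by blast
  then have fa: "fL la = va" using DLF_f by blast
  have na: "la \<notin> set (DL 7)" using assms(2) la vec_Delta[OF lla] Dl_DL[of 7] by auto
  obtain lb where lb: "lb \<in> set CL" "\<beta> = vec lb" using assms(4) Delta_vec by blast
  have llb: "length lb = 7" using lb CL_len by blast
  have "Dl s lb" using assms(4) lb vec_Delta[OF llb] by simp
  then have "lb \<in> set (DL s)" using Dl_DL s by blast
  then obtain vb where vb: "(lb,vb) \<in> set (DLF s)" by (auto simp: DL_def)
  have fb: "fL lb = vb" using DLF_f[OF s vb] .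
  have "fE7 \<beta> \<oplus>\<^sub>V fE7 \<alpha> \<in> Gamma_s s \<longleftrightarrow> vb \<oplus>\<^sub>V va \<in> set (map snd (DLF s))"
    using Gamma_eq[OF s] fE7_vec la lb fa fb by simp
  also have "\<dots> \<longleftrightarrow> (map2 (+) lb la \<in> set (DL s) \<or> map2 (-) lb la \<in> set (DL s))"
    using Big[OF s va na vb] .
  also have "\<dots> \<longleftrightarrow> (\<lambda>i. \<beta> i + \<alpha> i) \<in> Delta_s s \<or> (\<lambda>i. \<beta> i - \<alpha> i) \<in> Delta_s s"
  proof -
    have "(\<lambda>i. \<beta> i + \<alpha> i) = vec (map2 (+) lb la)" "(\<lambda>i. \<beta> i - \<alpha> i) = vec (map2 (-) lb la)"
      using vec_add[OF llb lla] vec_sub[OF llb lla] la lb by simp_all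
    moreover have "length (map2 (+) lb la) = 7" "length (map2 (-) lb la) = (7::nat)"
      using lla llb by simp_all
    ultimately show ?thesis using vec_Delta Dl_DL[OF s] by simp
  qed
  finally show ?thesis .
qed

end
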